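(* Let $N\ge2$ and let $\Lambda$ be a differentiable Young function satisfying $s_\Lambda<N$. Then there is $C>0$ such that for any $u\in L^{\Lambda_*}(\mathbb{R}^N)$ and $v\in L^N(\mathbb{R}^N)$ one has $\|uv\|_\Lambda\le C\|u\|_{\Lambda_*}\|v\|_N$.
   Context: A Young function is a convex $\Lambda:[0,\infty)\to[0,\infty)$ with $\Lambda(t)=0$ iff $t=0$, $\lim_{t\to0^+}\Lambda(t)/t=0$ and $\lim_{t\to\infty}\Lambda(t)/t=\infty$; $s_\Lambda:=\sup_{t>0}\frac{t\Lambda'(t)}{\Lambda(t)}$. With $N'=N/(N-1)$, the Sobolev conjugate is $\Lambda_*:=\Lambda\circ\mathscr{H}^{-1}$, where $\mathscr{H}(t)=\big(\int_0^t(\tau/\Lambda(\tau))^{N'-1}d\tau\big)^{1/N'}$. $\|\cdot\|_\Lambda$ denotes the Luxemburg norm $\inf\{\tau>0:\int_{\mathbb{R}^N}\Lambda(|u|/\tau)\,dx\le1\}$, $L^\Lambda$ the corresponding Orlicz space, $\|\cdot\|_N$ the $L^N$ norm. *)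

theory Defs
  imports "HOL-Analysis.Analysis"
begin

definition young_function :: "(real \<Rightarrow> real) \<Rightarrow> bool" where
  "young_function \<Lambda> \<longleftrightarrow>
     convex_on {0..} \<Lambda> \<and>
     (\<forall>t\<ge>0. \<Lambda> t \<ge> 0) \<and>
     (\<forall>t\<ge>0. \<Lambda> t = 0 \<longleftrightarrow> t = 0) \<and>
     ((\<lambda>t. \<Lambda> t / t) \<longlongrightarrow> 0) (at_right 0) \<and>
     filterlim (\<lambda>t. \<Lambda> t / t) at_top at_top"

definition s_index :: "(real \<Rightarrow> real) \<Rightarrow> ereal" where
  "s_index \<Lambda> = (SUP t\<in>{0<..}. ereal (t * deriv \<Lambda> t / \<Lambda> t))"

text \<open>H(t) = (int_0^t (tau/Lambda tau)^(N'-1) dtau)^(1/N'), with N' = N/(N-1),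
  so N' - 1 = 1/(N-1) and 1/N' = (N-1)/N.\<close>
definition sob_H :: "(real \<Rightarrow> real) \<Rightarrow> nat \<Rightarrow> real \<Rightarrow> real" where
  "sob_H \<Lambda> N t =
     (LBINT \<tau>=0..t. (\<tau> / \<Lambda> \<tau>) powr (1 / (real N - 1))) powr ((real N - 1) / real N)"

definition sobolev_conjugate :: "(real \<Rightarrow> real) \<Rightarrow> nat \<Rightarrow> real \<Rightarrow> real" where
  "sobolev_conjugate \<Lambda> N = \<Lambda> \<circ> inv_into {0..} (sob_H \<Lambda> N)"

definition orlicz_space :: "(real \<Rightarrow> real) \<Rightarrow> ('a::euclidean_space \<Rightarrow> real) set" where
  "orlicz_space \<Lambda> = {u \<in> borel_measurable lebesgue.
      \<exists>\<tau>>0. (\<integral>\<^sup>+ x. ennreal (\<Lambda> (\<bar>u x\<bar> / \<tau>)) \<partial>lebesgue) < \<infinity>}"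

definition luxemburg_norm :: "(real \<Rightarrow> real) \<Rightarrow> ('a::euclidean_space \<Rightarrow> real) \<Rightarrow> real" where
  "luxemburg_norm \<Lambda> u = Inf {\<tau>. \<tau> > 0 \<and>
      (\<integral>\<^sup>+ x. ennreal (\<Lambda> (\<bar>u x\<bar> / \<tau>)) \<partial>lebesgue) \<le> 1}"

definition lp_space :: "nat \<Rightarrow> ('a::euclidean_space \<Rightarrow> real) set" where
  "lp_space p = {v \<in> borel_measurable lebesgue. integrable lebesgue (\<lambda>x. \<bar>v x\<bar> ^ p)}"

definition lp_norm :: "nat \<Rightarrow> ('a::euclidean_space \<Rightarrow> real) \<Rightarrow> real" where
  "lp_norm p v = (integral\<^sup>L lebesgue (\<lambda>x. \<bar>v x\<bar> ^ p)) powr (1 / real p)"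

end

theory Submission
  imports Defs
begin

locale yset =
  fixes L :: "real \<Rightarrow> real" and N :: nat and s0 :: real
  assumes young: "young_function L"
    and diff: "\<forall>t>0. L differentiable (at t)"
    and N2: "N \<ge> 2"
    and s0N: "s0 < real N"
    and sbound: "\<And>t. t > 0 \<Longrightarrow> t * deriv L t / L t \<le> s0"
begin

lemma L0: "L 0 = 0" using young by (simp add: young_function_def)
lemma Lnn: "t \<ge> 0 \<Longrightarrow> L t \<ge> 0" using young by (simp add: young_function_def)
lemma Lpos: "t > 0 \<Longrightarrow> L t > 0"
  using young unfolding young_function_def
  by (metis less_eq_real_def less_irrefl)
lemma Lconv: "convex_on {0..} L" using young by (simp add: young_function_def)

lemma Lchord: assumes "0 \<le> x" "x \<le> y" "0 < y" shows "L x \<le> x / y * L y"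
proof -
  have "L ((1 - x/y) *\<^sub>R 0 + (x/y) *\<^sub>R y) \<le> (1 - x/y) * L 0 + (x/y) * L y"
    by (rule convex_onD[OF Lconv]) (use assms in auto)
  then show ?thesis using assms L0 by simp
qed

lemma Lmono: assumes "0 \<le> x" "x \<le> y" shows "L x \<le> L y"
proof (cases "y = 0")
  case True then show ?thesis using assms by simp
next
  case False
  then have y: "y > 0" using assms by simp
  have "L x \<le> x / y * L y" by (rule Lchord) (use assms y in auto)
  also have "\<dots> \<le> L y" using Lnn[of y] assms y
    by (simp add: pos_divide_le_eq mult_right_mono mult.commute)
  finally show ?thesis .
qed

lemma Ldiv: assumes "x \<ge> 0" "c \<ge> 1" shows "L (x / c) \<le> L x / c"
proof (cases "x = 0")
  case True then show ?thesis using L0 by simp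
next
  case False
  have "L (x/c) \<le> (x/c)/x * L x" by (rule Lchord) (use assms False in \<open>auto simp: divide_le_eq\<close>)
  then show ?thesis using False assms by simp
qed

lemma Lderiv: "t > 0 \<Longrightarrow> (L has_real_derivative deriv L t) (at t)"
  using diff DERIV_deriv_iff_real_differentiable by blast

lemma Lcont: "continuous_on {0<..} L"
  by (meson DERIV_isCont Lderiv continuous_at_imp_continuous_on greaterThan_iff)

lemma Lpow: assumes "0 < t" "t \<le> r" shows "L r * t powr s0 \<le> L t * r powr s0"
proof -
  let ?f = "\<lambda>x. L x * x powr (-s0)"
  have "?f r \<le> ?f t"
  proof (rule DERIV_nonpos_imp_nonincreasing[OF assms(2)])
    fix x assume x: "t \<le> x" "x \<le> r"
    then have xp: "x > 0" using assms by simp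
    have d: "(?f has_real_derivative deriv L x * x powr (-s0) + L x * (-s0 * x powr (-s0 - 1))) (at x)"
      using DERIV_mult[OF Lderiv[OF xp] has_real_derivative_powr[OF xp, of "-s0"]] by (simp add: algebra_simps)
    have "x * deriv L x / L x \<le> s0" using sbound xp by simp
    then have "x * deriv L x \<le> s0 * L x" using Lpos[OF xp] by (simp add: divide_le_eq)
    moreover have "x powr (-s0) = x * x powr (-s0 - 1)" using xp
      by (simp add: powr_diff powr_minus divide_simps)
    ultimately have "deriv L x * x powr (-s0) + L x * (-s0 * x powr (-s0 - 1)) = 
       (x * deriv L x - s0 * L x) * x powr (-s0 - 1)" by (simp add: algebra_simps)
    also have "\<dots> \<le> 0" using \<open>x * deriv L x \<le> s0 * L x\<close>
      by (simp add: mult_nonpos_nonneg)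
    finally show "\<exists>y. (?f has_real_derivative y) (at x) \<and> y \<le> 0" using d by blast
  qed
  then have "L r * r powr (-s0) * (t powr s0 * r powr s0) \<le> L t * t powr (-s0) * (t powr s0 * r powr s0)"
    by (intro mult_right_mono) auto
  then show ?thesis using assms by (simp add: powr_minus field_simps)
qed

definition q where "q = 1 / (real N - 1)"
definition e where "e = (1 - s0) / (real N - 1)"
definition h where "h t = (t / L t) powr q"

lemma q_pos: "q > 0" using N2 by (simp add: q_def)
lemma e_gt: "e > -1"
proof -
  have "real N - 1 > 0" using N2 by simp
  then show ?thesis using s0N by (simp add: e_def field_simps)
qed

lemma h_nn: "h t \<ge> 0" by (simp add: h_def)
lemma h_pos: "t > 0 \<Longrightarrow> h t > 0" using Lpos[of t] by (simp add: h_def)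

lemma h_anti: assumes "0 < t" "t \<le> r" shows "h r \<le> h t"
proof -
  have "L t \<le> t / r * L r" by (rule Lchord) (use assms in auto)
  then have "r / L r \<le> t / L t" using Lpos[of t] Lpos[of r] assms
    by (simp add: field_simps)
  then show ?thesis unfolding h_def
    by (intro powr_mono2) (use q_pos Lpos[of r] assms in auto)
qed

lemma h_upper: assumes "0 < t" "t \<le> r" shows "h t \<le> h r * r powr (-e) * t powr e"
proof -
  have r: "r > 0" using assms by simp
  have "L r * t powr s0 \<le> L t * r powr s0" by (rule Lpow) (use assms in auto)
  then have "t / L t \<le> (r / L r) * (t powr (1 - s0) * r powr (s0 - 1))"
    using Lpos[of t] Lpos[of r] assms r
    by (simp add: powr_diff field_simps)
  then have "h t \<le> ((r / L r) * (t powr (1 - s0) * r powr (s0 - 1))) powr q"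
    unfolding h_def by (intro powr_mono2) (use q_pos Lpos[of t] assms in auto)
  also have "\<dots> = h r * (t powr ((1 - s0) * q) * r powr ((s0 - 1) * q))"
    unfolding h_def using Lpos[of r] r assms
    by (simp add: powr_mult[symmetric] powr_powr[symmetric] mult_nonneg_nonneg)
  also have "\<dots> = h r * r powr (-e) * t powr e"
  proof -
    have "(1 - s0) * q = e" "(s0 - 1) * q = -e" by (simp_all add: e_def q_def divide_simps)
    then show ?thesis by simp
  qed
  finally show ?thesis .
qed

lemma h_cont: "continuous_on {0<..} h"
proof -
  have "\<forall>x\<in>{0<..}. L x \<noteq> 0" using Lpos by force
  moreover have "\<forall>x\<in>{0<..}. x / L x \<ge> 0" using Lpos by (simp add: less_imp_le)
  ultimately show ?thesis unfolding h_def
    by (intro continuous_on_powr' continuous_intros continuous_on_subset[OF Lcont])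
       (auto simp: q_pos)
qed

lemma g_int: assumes "r \<ge> 0"
  shows "((\<lambda>t. h r * r powr (-e) * t powr e) has_integral (h r * r powr (-e) * (r powr (e+1) / (e+1)))) {0..r}"
  using has_integral_mult_right[OF has_integral_powr_from_0[OF e_gt assms]] by simp

lemma h_int_Ioo: assumes "r > 0" shows "h integrable_on {0<..<r}"
proof (rule measurable_bounded_by_integrable_imp_integrable)
  show "h \<in> borel_measurable (lebesgue_on {0<..<r})"
    by (rule continuous_imp_measurable_on_sets_lebesgue) 
       (auto intro: continuous_on_subset[OF h_cont])
  have "((\<lambda>t. h r * r powr (-e) * t powr e) has_integral (h r * r powr (-e) * (r powr (e+1) / (e+1)))) {0<..<r}"
    using g_int[of r] assms unfolding has_integral_Icc_iff_Ioo by simp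
  then show "(\<lambda>t. h r * r powr (-e) * t powr e) integrable_on {0<..<r}"
    by (rule has_integral_integrable)
  show "norm (h x) \<le> h r * r powr (-e) * x powr e" if "x \<in> {0<..<r}" for x
    using h_upper[of x r] that h_nn[of x] by simp
  show "{0<..<r} \<in> sets lebesgue" by simp
qed

lemma h_int: assumes "r \<ge> 0" shows "h integrable_on {0..r}"
proof (cases "r = 0")
  case True then show ?thesis by (metis cbox_interval integrable_on_refl)
next
  case False 
  then obtain I where "(h has_integral I) {0<..<r}" using h_int_Ioo[of r] assms
    unfolding integrable_on_def by force
  then have "(h has_integral I) {0..r}" unfolding has_integral_Icc_iff_Ioo .
  then show ?thesis by (rule has_integral_integrable)
qed

definition F where "F r = integral {0..r} h"

lemma F_LBINT: assumes "r \<ge> 0" shows "(LBINT t=0..r. h t) = F r"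
proof -
  have ai: "h absolutely_integrable_on {0<..<r}"
  proof (cases "r = 0")
    case True then show ?thesis by simp
  next
    case False 
    then have "h integrable_on {0<..<r}" using h_int_Ioo[of r] assms by simp
    then show ?thesis by (rule nonnegative_absolutely_integrable_1) (rule h_nn)
  qed
  have meas: "(\<lambda>x. indicator {0<..<r} x *\<^sub>R h x) \<in> borel_measurable borel"
    by (rule borel_measurable_continuous_on_indicator) (auto intro: continuous_on_subset[OF h_cont])
  then have meas': "(\<lambda>x. indicator {0<..<r} x *\<^sub>R h x) \<in> borel_measurable lborel"
    by simp
  have si: "set_integrable lborel {0<..<r} h"
    using ai unfolding set_integrable_def
    using integrable_completion[OF meas'] by simp
  have ei: "einterval 0 (ereal r) = {0<..<r}" by (metis einterval_eq_Icc zero_ereal_def)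
  have "(LBINT t=0..r. h t) = integral (einterval 0 r) h"
    by (rule interval_integral_eq_integral') (use assms si ei in auto)
  also have "\<dots> = F r" unfolding F_def ei by (simp add: integral_open_interval_real)
  finally show ?thesis .
qed

lemma F0: "F 0 = 0" by (simp add: F_def)

lemma F_cont: "continuous_on {0..R} F"
proof (cases "R \<ge> 0")
  case True then show ?thesis unfolding F_def by (intro indefinite_integral_continuous_1 h_int)
next
  case False then show ?thesis by simp
qed

lemma F_mono: assumes "0 \<le> x" "x \<le> y" shows "F x \<le> F y"
  unfolding F_def by (rule integral_subset_le) (use assms h_int h_nn in auto)

lemma F_lower: assumes "r > 0" shows "r * h r \<le> F r"
proof -
  have "((\<lambda>_. h r) has_integral (r * h r)) {0<..<r}"
    using has_integral_const_real[of "h r" 0 r] assms unfolding has_integral_Icc_iff_Ioo by simp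
  moreover have "(h has_integral F r) {0<..<r}"
    unfolding F_def using h_int[of r] assms has_integral_Icc_iff_Ioo
    by (metis has_integral_integrable_integral less_eq_real_def)
  ultimately show ?thesis
    by (rule has_integral_le) (use h_anti in auto)
qed

lemma F_upper: assumes "r > 0" shows "F r \<le> r * h r / (e + 1)"
proof -
  have "(h has_integral F r) {0<..<r}"
    unfolding F_def using h_int[of r] assms has_integral_Icc_iff_Ioo
    by (metis has_integral_integrable_integral less_eq_real_def)
  moreover have "((\<lambda>t. h r * r powr (-e) * t powr e) has_integral (h r * r powr (-e) * (r powr (e+1) / (e+1)))) {0<..<r}"
    using g_int[of r] assms has_integral_Icc_iff_Ioo by auto
  ultimately have "F r \<le> h r * r powr (-e) * (r powr (e+1) / (e+1))"
    by (rule has_integral_le) (use h_upper in auto)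
  also have "\<dots> = r * h r / (e + 1)"
    using assms by (simp add: powr_add powr_minus field_simps)
  finally show ?thesis .
qed

lemma F_nn: "t \<ge> 0 \<Longrightarrow> F t \<ge> 0" using F_mono[of 0 t] F0 by simp
lemma F_pos: "t > 0 \<Longrightarrow> F t > 0"
  using F_lower[of t] h_pos[of t] by (smt (verit) mult_pos_pos)

definition p where "p = (real N - 1) / real N"
lemma p_pos: "p > 0" using N2 by (simp add: p_def)

definition H where "H t = F t powr p"

lemma H_sob: "t \<ge> 0 \<Longrightarrow> sob_H L N t = H t"
  unfolding sob_H_def H_def p_def using F_LBINT[of t] by (simp add: h_def q_def)

lemma H0: "H 0 = 0" by (simp add: H_def F0)
lemma H_mono: "0 \<le> x \<Longrightarrow> x \<le> y \<Longrightarrow> H x \<le> H y"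
  unfolding H_def by (intro powr_mono2) (use p_pos F_nn F_mono in auto)
lemma H_pos: "t > 0 \<Longrightarrow> H t > 0" unfolding H_def using F_pos[of t] by simp

lemma H_cont: "continuous_on {0..R} H"
  unfolding H_def by (intro continuous_on_powr' continuous_intros F_cont) (use F_nn p_pos in auto)

lemma F_big_aux: assumes "R \<ge> 1" shows "R powr (1 + e) * L 1 powr (-q) \<le> F R"
proof -
  have L1: "L 1 > 0" using Lpos by simp
  have "L R * 1 powr s0 \<le> L 1 * R powr s0" by (rule Lpow) (use assms in auto)
  then have LR: "L R \<le> L 1 * R powr s0" by simp
  have RLR: "R powr (1 - s0) / L 1 \<le> R / L R"
    using LR L1 Lpos[of R] assms by (simp add: powr_diff field_simps)
  have "R powr (1 + e) * L 1 powr (-q) = R * (R powr (1 - s0) / L 1) powr q"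
  proof -
    have "(1 - s0) * q = e" by (simp add: e_def q_def divide_simps)
    then show ?thesis using assms L1
      by (simp add: powr_divide powr_powr powr_add powr_minus divide_simps)
  qed
  also have "\<dots> \<le> R * h R" unfolding h_def
    by (intro mult_left_mono powr_mono2) (use RLR L1 q_pos assms in auto)
  also have "\<dots> \<le> F R" using F_lower[of R] assms by simp
  finally show ?thesis .
qed

lemma F_big: "\<exists>R\<ge>1. Y \<le> F R"
proof -
  have L1: "L 1 > 0" using Lpos by simp
  have e1: "1 + e > 0" using e_gt by simp
  define Y' where "Y' = max Y 0 * L 1 powr q"
  define R where "R = max 1 (Y' powr (1 / (1 + e)))"
  have R1: "R \<ge> 1" by (simp add: R_def)
  have "Y' \<le> R powr (1 + e)"
  proof (cases "Y' = 0")
    case True then show ?thesis by simp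
  next
    case False
    then have "Y' > 0" using L1 unfolding Y'_def by (simp add: max_def split: if_splits)
    then have "Y' = (Y' powr (1 / (1 + e))) powr (1 + e)" using e1 by (simp add: powr_powr)
    also have "\<dots> \<le> R powr (1 + e)" unfolding R_def
      by (intro powr_mono2) (use e1 in auto)
    finally show ?thesis .
  qed
  then have "max Y 0 \<le> R powr (1 + e) * L 1 powr (-q)"
    using L1 by (simp add: Y'_def powr_minus divide_simps)
  also have "\<dots> \<le> F R" by (rule F_big_aux[OF R1])
  finally show ?thesis using R1 by auto
qed

lemma H_surj: assumes "a \<ge> 0" shows "\<exists>s\<ge>0. H s = a"
proof -
  obtain R where R: "R \<ge> 1" "a powr (1/p) \<le> F R" using F_big by blast
  have "a = (a powr (1/p)) powr p" using p_pos assms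
    by (cases "a = 0") (simp_all add: powr_powr)
  also have "\<dots> \<le> H R" unfolding H_def by (intro powr_mono2) (use R p_pos in auto)
  finally have "a \<le> H R" .
  then have "\<exists>x. 0 \<le> x \<and> x \<le> R \<and> H x = a"
    by (intro IVT' H_cont) (use H0 assms R in auto)
  then show ?thesis by blast
qed

definition G where "G a = inv_into {0..} (sob_H L N) a"

lemma G: assumes "a \<ge> 0" shows "G a \<ge> 0" "H (G a) = a"
proof -
  obtain s where s: "s \<ge> 0" "H s = a" using H_surj[OF assms] by blast
  then have "a \<in> sob_H L N ` {0..}" using H_sob[of s] by force
  then have "G a \<in> {0..}" "sob_H L N (G a) = a" unfolding G_def
    by (rule inv_into_into, rule f_inv_into_f)
  then show "G a \<ge> 0" "H (G a) = a" using H_sob by auto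
qed

lemma Ls_eq: "sobolev_conjugate L N a = L (G a)"
  by (simp add: sobolev_conjugate_def G_def)

lemma G_mono: assumes "0 \<le> a" "a \<le> b" shows "G a \<le> G b"
proof (rule ccontr)
  assume "\<not> G a \<le> G b"
  then have "H (G b) \<le> H (G a)" using G[of b] assms by (intro H_mono) auto
  then have "a = b" using G[of a] G[of b] assms by simp
  then show False using \<open>\<not> G a \<le> G b\<close> by simp
qed

lemma Ls_mono: "0 \<le> a \<Longrightarrow> a \<le> b \<Longrightarrow> sobolev_conjugate L N a \<le> sobolev_conjugate L N b"
  unfolding Ls_eq by (intro Lmono G_mono G) auto

lemma Ls_nn: "0 \<le> a \<Longrightarrow> 0 \<le> sobolev_conjugate L N a"
  unfolding Ls_eq by (intro Lnn G)

definition K where "K = 1 / (e + 1) ^ (N - 1)"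
lemma K_pos: "K > 0" using e_gt by (simp add: K_def)

lemma HN: assumes "r > 0" shows "L r * H r ^ N \<le> K * r ^ N"
proof -
  have Fp: "F r > 0" using F_pos assms by simp
  have N1: "N = Suc (N - 1)" using N2 by simp
  have "H r ^ N = F r ^ (N - 1)"
  proof -
    have "H r ^ N = F r powr (p * real N)" unfolding H_def using Fp
      by (simp add: powr_realpow[symmetric] powr_powr)
    also have "p * real N = real (N - 1)" using N2 by (simp add: p_def of_nat_diff)
    finally show ?thesis using Fp by (simp add: powr_realpow)
  qed
  also have "\<dots> \<le> (r * h r / (e + 1)) ^ (N - 1)"
    by (intro power_mono F_upper assms) (use Fp in simp)
  also have "\<dots> = r ^ (N - 1) * (h r ^ (N - 1)) * K"
    by (simp add: K_def power_mult_distrib power_divide)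
  also have "h r ^ (N - 1) = r / L r"
  proof -
    have "h r ^ (N - 1) = (r / L r) powr (q * real (N - 1))" unfolding h_def
      using Lpos[of r] assms by (simp add: powr_realpow[symmetric] powr_powr)
    also have "q * real (N - 1) = 1" using N2 by (simp add: q_def of_nat_diff)
    finally show ?thesis using Lpos[of r] assms by simp
  qed
  finally have "H r ^ N \<le> r ^ (N - 1) * (r / L r) * K" .
  then have "L r * H r ^ N \<le> L r * (r ^ (N - 1) * (r / L r) * K)"
    using Lpos[of r] assms by (intro mult_left_mono) auto
  also have "\<dots> = K * r ^ N" using Lpos[of r] assms
    by (subst (2) N1) (simp add: field_simps)
  finally show ?thesis .
qed

lemma key: assumes "a \<ge> 0" "b \<ge> 0"
  shows "L (a * b) \<le> sobolev_conjugate L N a + K * b ^ N"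
proof -
  define s where "s = G a"
  have s: "s \<ge> 0" "H s = a" using G assms unfolding s_def by auto
  have Ls: "sobolev_conjugate L N a = L s" by (simp add: Ls_eq s_def)
  have Kb: "K * b ^ N \<ge> 0" using K_pos assms by simp
  show ?thesis
  proof (cases "a * b \<le> s")
    case True
    then have "L (a * b) \<le> L s" using assms by (intro Lmono) auto
    then show ?thesis using Ls Kb by simp
  next
    case False
    define r where "r = a * b"
    have r: "r > s" "r > 0" using False s by (auto simp: r_def)
    have a0: "a > 0" using r assms by (cases "a = 0") (auto simp: r_def)
    have "a \<le> H r" using H_mono[of s r] s r by simp
    then have "a ^ N \<le> H r ^ N" using assms by (intro power_mono) auto
    then have "L r * a ^ N \<le> L r * H r ^ N" using Lpos[of r] r by (intro mult_left_mono) auto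
    also have "\<dots> \<le> K * r ^ N" by (rule HN) (use r in auto)
    also have "\<dots> = (K * b ^ N) * a ^ N" by (simp add: r_def power_mult_distrib)
    finally have "L r \<le> K * b ^ N" using a0 by simp
    then show ?thesis using Ls Lnn[of s] s by (simp add: r_def)
  qed
qed

lemma scaling: assumes "c \<ge> 1"
  shows "\<exists>d>0. \<forall>a\<ge>0. sobolev_conjugate L N (a / d) \<le> sobolev_conjugate L N a / c"
proof -
  have e1: "e + 1 > 0" using e_gt by simp
  define d where "d = (c / (e + 1)) powr p + 1"
  have dpos: "d > 0" by (simp add: d_def add_nonneg_pos)
  have dlt: "1 / d < ((e + 1) / c) powr p"
  proof -
    have cp: "(c / (e + 1)) powr p > 0" using assms e1 by simp
    have "((e + 1) / c) powr p = 1 / (c / (e + 1)) powr p"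
      using assms e1 by (simp add: powr_divide)
    also have "1 / d < \<dots>" unfolding d_def by (rule frac_less2) (use cp in auto)
    finally show ?thesis .
  qed
  have "sobolev_conjugate L N (a / d) \<le> sobolev_conjugate L N a / c" if a: "a \<ge> 0" for a
  proof -
    define s where "s = G a"
    have s: "s \<ge> 0" "H s = a" using G a unfolding s_def by auto
    have Ls: "sobolev_conjugate L N a = L s" by (simp add: Ls_eq s_def)
    show ?thesis
    proof (cases "a = 0")
      case True
      then have "s = 0" using s H_pos by (metis less_eq_real_def less_irrefl)
      then show ?thesis using True Ls L0 by simp
    next
      case False
      then have ap: "a > 0" using a by simp
      have sp: "s > 0" using s ap H0 by (metis less_eq_real_def less_irrefl)
      define y where "y = s / c"
      have yp: "y > 0" using sp assms by (simp add: y_def)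
      have ys: "y \<le> s" using sp assms by (simp add: y_def divide_le_eq)
      have "(e + 1) / c * F s \<le> s * h s / c" using F_upper[OF sp] e1 assms
        by (simp add: divide_simps mult.commute)
      also have "\<dots> = y * h s" by (simp add: y_def)
      also have "\<dots> \<le> y * h y" using h_anti[OF yp ys] yp by (intro mult_left_mono) auto
      also have "\<dots> \<le> F y" using F_lower[OF yp] .
      finally have Fy: "(e + 1) / c * F s \<le> F y" .
      have pm: "((e + 1) / c * F s) powr p = ((e + 1) / c) powr p * F s powr p"
        by (rule powr_mult)
      have "((e + 1) / c) powr p * a = ((e + 1) / c * F s) powr p"
        unfolding pm using s by (simp add: H_def)
      also have "\<dots> \<le> H y" unfolding H_def
        by (intro powr_mono2 Fy) (use p_pos e1 assms F_nn[OF s(1)] in auto)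
      finally have "((e + 1) / c) powr p * a \<le> H y" .
      moreover have "a / d < ((e + 1) / c) powr p * a" using dlt ap
        by (simp add: mult.commute) (metis divide_inverse dlt inverse_eq_divide mult_strict_left_mono mult.commute)
      ultimately have lt: "a / d < H y" by simp
      define t where "t = G (a / d)"
      have t: "t \<ge> 0" "H t = a / d" using G[of "a / d"] a dpos unfolding t_def by auto
      have "t \<le> y"
      proof (rule ccontr)
        assume "\<not> t \<le> y"
        then have "H y \<le> H t" using yp by (intro H_mono) auto
        then show False using lt t by simp
      qed
      then have "L t \<le> L y" using t by (intro Lmono) auto
      also have "\<dots> \<le> L s / c" unfolding y_def by (rule Ldiv) (use sp assms in auto)
      finally show ?thesis using Ls by (simp add: Ls_eq t_def)
    qed
  qed
  then show ?thesis using dpos by blast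
qed

lemma Ls_meas: assumes "f \<in> borel_measurable M" "\<alpha> > 0"
  shows "(\<lambda>x. sobolev_conjugate L N (\<bar>f x\<bar> / \<alpha>)) \<in> borel_measurable M"
proof -
  define m where "m y = sobolev_conjugate L N (max y 0)" for y
  have "mono m" unfolding m_def mono_def by (auto intro!: Ls_mono)
  then have "m \<in> borel_measurable borel" by (rule borel_measurable_mono)
  moreover have "(\<lambda>x. \<bar>f x\<bar> / \<alpha>) \<in> borel_measurable M" using assms by measurable
  ultimately have "(\<lambda>x. m (\<bar>f x\<bar> / \<alpha>)) \<in> borel_measurable M" by (rule measurable_compose[rotated])
  moreover have "m (\<bar>f x\<bar> / \<alpha>) = sobolev_conjugate L N (\<bar>f x\<bar> / \<alpha>)" for x
    using assms by (simp add: m_def)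
  ultimately show ?thesis by simp
qed

lemma L_meas: assumes "f \<in> borel_measurable M" "\<alpha> > 0"
  shows "(\<lambda>x. L (\<bar>f x\<bar> / \<alpha>)) \<in> borel_measurable M"
proof -
  define m where "m y = L (max y 0)" for y
  have "mono m" unfolding m_def mono_def by (auto intro!: Lmono)
  then have "m \<in> borel_measurable borel" by (rule borel_measurable_mono)
  moreover have "(\<lambda>x. \<bar>f x\<bar> / \<alpha>) \<in> borel_measurable M" using assms by measurable
  ultimately have "(\<lambda>x. m (\<bar>f x\<bar> / \<alpha>)) \<in> borel_measurable M" by (rule measurable_compose[rotated])
  moreover have "m (\<bar>f x\<bar> / \<alpha>) = L (\<bar>f x\<bar> / \<alpha>)" for x
    using assms by (simp add: m_def)
  ultimately show ?thesis by simp
qed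

lemma modular:
  fixes u v :: "'a::euclidean_space \<Rightarrow> real"
  assumes um: "u \<in> borel_measurable lebesgue" and vm: "v \<in> borel_measurable lebesgue"
    and \<alpha>: "\<alpha> > 0" and \<beta>: "\<beta> > 0"
  shows "(\<integral>\<^sup>+ x. ennreal (L (\<bar>u x * v x\<bar> / ((1 + K) * \<alpha> * \<beta>))) \<partial>lebesgue)
     \<le> ennreal (1 / (1 + K)) * ((\<integral>\<^sup>+ x. ennreal (sobolev_conjugate L N (\<bar>u x\<bar> / \<alpha>)) \<partial>lebesgue)
          + ennreal K * (\<integral>\<^sup>+ x. ennreal ((\<bar>v x\<bar> / \<beta>) ^ N) \<partial>lebesgue))"
proof -
  let ?C = "1 + K"
  have C1: "?C \<ge> 1" using K_pos by simp
  have pw: "ennreal (L (\<bar>u x * v x\<bar> / (?C * \<alpha> * \<beta>))) \<le>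
      ennreal (1 / ?C) * (ennreal (sobolev_conjugate L N (\<bar>u x\<bar> / \<alpha>)) + ennreal K * ennreal ((\<bar>v x\<bar> / \<beta>) ^ N))" for x
  proof -
    define a where "a = \<bar>u x\<bar> / \<alpha>"
    define b where "b = \<bar>v x\<bar> / \<beta>"
    have ab: "a \<ge> 0" "b \<ge> 0" using \<alpha> \<beta> by (auto simp: a_def b_def)
    have eq: "\<bar>u x * v x\<bar> / (?C * \<alpha> * \<beta>) = (a * b) / ?C"
      by (simp add: a_def b_def abs_mult)
    have "L ((a * b) / ?C) \<le> L (a * b) / ?C" by (rule Ldiv) (use ab C1 in auto)
    also have "\<dots> \<le> (sobolev_conjugate L N a + K * b ^ N) / ?C"
      using key[OF ab] C1 by (simp add: divide_right_mono)
    finally have "L (\<bar>u x * v x\<bar> / (?C * \<alpha> * \<beta>)) \<le> 1 / ?C * (sobolev_conjugate L N a + K * b ^ N)"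
      using eq by simp
    then have "ennreal (L (\<bar>u x * v x\<bar> / (?C * \<alpha> * \<beta>))) \<le> ennreal (1 / ?C * (sobolev_conjugate L N a + K * b ^ N))"
      by (rule ennreal_leI)
    also have "\<dots> = ennreal (1 / ?C) * (ennreal (sobolev_conjugate L N a) + ennreal K * ennreal (b ^ N))"
    proof -
      have X: "sobolev_conjugate L N a \<ge> 0" "K * b ^ N \<ge> 0" "1 / ?C \<ge> 0"
        using Ls_nn[OF ab(1)] K_pos ab C1 by auto
      have "ennreal (1 / ?C * (sobolev_conjugate L N a + K * b ^ N)) = 
          ennreal (1 / ?C) * ennreal (sobolev_conjugate L N a + K * b ^ N)"
        using X by (intro ennreal_mult) auto
      also have "ennreal (sobolev_conjugate L N a + K * b ^ N) = 
          ennreal (sobolev_conjugate L N a) + ennreal (K * b ^ N)"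
        using X by (intro ennreal_plus) auto
      also have "ennreal (K * b ^ N) = ennreal K * ennreal (b ^ N)"
        using K_pos ab by (intro ennreal_mult) auto
      finally show ?thesis .
    qed
    finally show ?thesis by (simp add: a_def b_def)
  qed
  have m1: "(\<lambda>x. ennreal (sobolev_conjugate L N (\<bar>u x\<bar> / \<alpha>))) \<in> borel_measurable lebesgue"
    using Ls_meas[OF um \<alpha>] by measurable
  have m2: "(\<lambda>x. ennreal ((\<bar>v x\<bar> / \<beta>) ^ N)) \<in> borel_measurable lebesgue"
    using vm by measurable
  have "(\<integral>\<^sup>+ x. ennreal (L (\<bar>u x * v x\<bar> / (?C * \<alpha> * \<beta>))) \<partial>lebesgue) \<le>
     (\<integral>\<^sup>+ x. ennreal (1 / ?C) * (ennreal (sobolev_conjugate L N (\<bar>u x\<bar> / \<alpha>)) + ennreal K * ennreal ((\<bar>v x\<bar> / \<beta>) ^ N)) \<partial>lebesgue)"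
    by (intro nn_integral_mono pw)
  also have "\<dots> = ennreal (1 / ?C) * ((\<integral>\<^sup>+ x. ennreal (sobolev_conjugate L N (\<bar>u x\<bar> / \<alpha>)) \<partial>lebesgue)
          + ennreal K * (\<integral>\<^sup>+ x. ennreal ((\<bar>v x\<bar> / \<beta>) ^ N) \<partial>lebesgue))"
    using m1 m2 by (simp add: nn_integral_cmult nn_integral_add)
  finally show ?thesis .
qed

lemma main:
  fixes u v :: "'a::euclidean_space \<Rightarrow> real"
  assumes uo: "u \<in> orlicz_space (sobolev_conjugate L N)" and vl: "v \<in> lp_space N"
  shows "(\<lambda>x. u x * v x) \<in> orlicz_space L \<and>
           luxemburg_norm L (\<lambda>x. u x * v x)
             \<le> (1 + K) * luxemburg_norm (sobolev_conjugate L N) u * lp_norm N v"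
proof -
  let ?C = "1 + K"
  have C1: "?C \<ge> 1" using K_pos by simp
  define Au where "Au = {\<tau>. \<tau> > 0 \<and> (\<integral>\<^sup>+ x. ennreal (sobolev_conjugate L N (\<bar>u x\<bar> / \<tau>)) \<partial>lebesgue) \<le> 1}"
  define Auv where "Auv = {\<tau>. \<tau> > 0 \<and> (\<integral>\<^sup>+ x. ennreal (L (\<bar>u x * v x\<bar> / \<tau>)) \<partial>lebesgue) \<le> 1}"
  have um: "u \<in> borel_measurable lebesgue" using uo by (simp add: orlicz_space_def)
  have vm: "v \<in> borel_measurable lebesgue" and vi: "integrable lebesgue (\<lambda>x. \<bar>v x\<bar> ^ N)"
    using vl by (auto simp: lp_space_def)
  define Iv where "Iv = integral\<^sup>L lebesgue (\<lambda>x. \<bar>v x\<bar> ^ N)"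
  have Iv0: "Iv \<ge> 0" unfolding Iv_def by simp
  have vint: "(\<integral>\<^sup>+ x. ennreal ((\<bar>v x\<bar> / \<beta>) ^ N) \<partial>lebesgue) = ennreal (Iv / \<beta> ^ N)" if "\<beta> > 0" for \<beta>
  proof -
    have eq: "(\<lambda>x. (\<bar>v x\<bar> / \<beta>) ^ N) = (\<lambda>x. \<bar>v x\<bar> ^ N / \<beta> ^ N)" by (simp add: power_divide)
    have "integrable lebesgue (\<lambda>x. \<bar>v x\<bar> ^ N / \<beta> ^ N)" using vi by simp
    then have "(\<integral>\<^sup>+ x. ennreal (\<bar>v x\<bar> ^ N / \<beta> ^ N) \<partial>lebesgue) = ennreal (integral\<^sup>L lebesgue (\<lambda>x. \<bar>v x\<bar> ^ N / \<beta> ^ N))"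
      by (intro nn_integral_eq_integral) (use that in auto)
    also have "integral\<^sup>L lebesgue (\<lambda>x. \<bar>v x\<bar> ^ N / \<beta> ^ N) = Iv / \<beta> ^ N"
      unfolding Iv_def by simp
    finally show ?thesis by (simp only: power_divide)
  qed
  obtain \<alpha>0 where \<alpha>0: "\<alpha>0 \<in> Au"
  proof -
    obtain \<tau> where \<tau>: "\<tau> > 0" and fin: "(\<integral>\<^sup>+ x. ennreal (sobolev_conjugate L N (\<bar>u x\<bar> / \<tau>)) \<partial>lebesgue) < \<infinity>"
      using uo by (auto simp: orlicz_space_def)
    define I where "I = (\<integral>\<^sup>+ x. ennreal (sobolev_conjugate L N (\<bar>u x\<bar> / \<tau>)) \<partial>lebesgue)"
    define c where "c = max 1 (enn2real I)"
    have c1: "c \<ge> 1" by (simp add: c_def)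
    obtain d where d: "d > 0" "\<And>a. a \<ge> 0 \<Longrightarrow> sobolev_conjugate L N (a / d) \<le> sobolev_conjugate L N a / c"
      using scaling[OF c1] by blast
    have mI: "(\<lambda>x. ennreal (sobolev_conjugate L N (\<bar>u x\<bar> / \<tau>))) \<in> borel_measurable lebesgue"
      using Ls_meas[OF um \<tau>] by measurable
    have "(\<integral>\<^sup>+ x. ennreal (sobolev_conjugate L N (\<bar>u x\<bar> / (d * \<tau>))) \<partial>lebesgue)
        \<le> (\<integral>\<^sup>+ x. ennreal (1 / c) * ennreal (sobolev_conjugate L N (\<bar>u x\<bar> / \<tau>)) \<partial>lebesgue)"
    proof (intro nn_integral_mono)
      fix x
      have "sobolev_conjugate L N (\<bar>u x\<bar> / (d * \<tau>)) = sobolev_conjugate L N ((\<bar>u x\<bar> / \<tau>) / d)"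
        by (simp add: mult.commute)
      also have "\<dots> \<le> sobolev_conjugate L N (\<bar>u x\<bar> / \<tau>) / c" using d(2)[of "\<bar>u x\<bar> / \<tau>"] \<tau> by simp
      finally have "ennreal (sobolev_conjugate L N (\<bar>u x\<bar> / (d * \<tau>))) \<le> ennreal (1 / c * sobolev_conjugate L N (\<bar>u x\<bar> / \<tau>))"
        by (intro ennreal_leI) simp
      also have "\<dots> = ennreal (1 / c) * ennreal (sobolev_conjugate L N (\<bar>u x\<bar> / \<tau>))"
        using c1 Ls_nn[of "\<bar>u x\<bar> / \<tau>"] \<tau> by (intro ennreal_mult) auto
      finally show "ennreal (sobolev_conjugate L N (\<bar>u x\<bar> / (d * \<tau>))) \<le> ennreal (1 / c) * ennreal (sobolev_conjugate L N (\<bar>u x\<bar> / \<tau>))" .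
    qed
    also have "\<dots> = ennreal (1 / c) * I" unfolding I_def using mI by (simp add: nn_integral_cmult)
    also have "I = ennreal (enn2real I)" using fin unfolding I_def by simp
    also have "ennreal (1 / c) * ennreal (enn2real I) = ennreal (enn2real I / c)"
      using c1 by (simp add: ennreal_mult[symmetric])
    also have "\<dots> \<le> 1" using c1 by (simp add: c_def divide_le_eq)
    finally have "d * \<tau> \<in> Au" unfolding Au_def using d \<tau> by simp
    then show ?thesis by (rule that)
  qed
  have est: "?C * \<alpha> * \<beta> \<in> Auv" if \<alpha>: "\<alpha> \<in> Au" and \<beta>: "\<beta> > 0" "Iv \<le> \<beta> ^ N" for \<alpha> \<beta>
  proof -
    have ap: "\<alpha> > 0" and a1: "(\<integral>\<^sup>+ x. ennreal (sobolev_conjugate L N (\<bar>u x\<bar> / \<alpha>)) \<partial>lebesgue) \<le> 1"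
      using \<alpha> by (auto simp: Au_def)
    have b1: "ennreal (Iv / \<beta> ^ N) \<le> 1" using \<beta> by (simp add: divide_le_eq)
    have "(\<integral>\<^sup>+ x. ennreal (L (\<bar>u x * v x\<bar> / (?C * \<alpha> * \<beta>))) \<partial>lebesgue)
       \<le> ennreal (1 / ?C) * ((\<integral>\<^sup>+ x. ennreal (sobolev_conjugate L N (\<bar>u x\<bar> / \<alpha>)) \<partial>lebesgue)
          + ennreal K * (\<integral>\<^sup>+ x. ennreal ((\<bar>v x\<bar> / \<beta>) ^ N) \<partial>lebesgue))"
      by (rule modular[OF um vm ap \<beta>(1)])
    also have "\<dots> \<le> ennreal (1 / ?C) * (1 + ennreal K * 1)"
      unfolding vint[OF \<beta>(1)]
      by (intro mult_left_mono add_mono a1 b1) auto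
    also have "\<dots> = 1"
    proof -
      have "1 + ennreal K * 1 = ennreal ?C"
        using ennreal_plus[of 1 K] K_pos by simp
      then have "ennreal (1 / ?C) * (1 + ennreal K * 1) = ennreal (1 / ?C) * ennreal ?C"
        by (simp only: )
      also have "\<dots> = ennreal (1 / ?C * ?C)" using C1 by (intro ennreal_mult[symmetric]) auto
      also have "\<dots> = 1" using C1 by simp
      finally show ?thesis .
    qed
    finally show ?thesis unfolding Auv_def using ap \<beta> C1 by simp
  qed
  define \<beta>0 where "\<beta>0 = (if Iv > 0 then Iv powr (1 / real N) else 1)"
  have N0: "N > 0" using N2 by simp
  have \<beta>0: "\<beta>0 > 0" "Iv \<le> \<beta>0 ^ N"
  proof -
    show "\<beta>0 > 0" by (simp add: \<beta>0_def)
    show "Iv \<le> \<beta>0 ^ N"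
    proof (cases "Iv > 0")
      case True
      then have "\<beta>0 ^ N = Iv" using N0
        by (simp add: \<beta>0_def powr_realpow[symmetric] powr_powr)
      then show ?thesis by simp
    next
      case False then show ?thesis using Iv0 by (simp add: \<beta>0_def)
    qed
  qed
  have inAuv: "?C * \<alpha>0 * \<beta>0 \<in> Auv" using est[OF \<alpha>0 \<beta>0] .
  have memb: "(\<lambda>x. u x * v x) \<in> orlicz_space L"
  proof -
    have "(\<lambda>x. u x * v x) \<in> borel_measurable lebesgue" using um vm by measurable
    moreover have "?C * \<alpha>0 * \<beta>0 > 0" and "(\<integral>\<^sup>+ x. ennreal (L (\<bar>u x * v x\<bar> / (?C * \<alpha>0 * \<beta>0))) \<partial>lebesgue) < \<infinity>"
      using inAuv by (auto simp: Auv_def top_unique intro: le_less_trans)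
    ultimately show ?thesis unfolding orlicz_space_def by blast
  qed
  have luv: "luxemburg_norm L (\<lambda>x. u x * v x) = Inf Auv" by (simp add: luxemburg_norm_def Auv_def)
  have lu: "luxemburg_norm (sobolev_conjugate L N) u = Inf Au" by (simp add: luxemburg_norm_def Au_def)
  have bddAuv: "bdd_below Auv" unfolding Auv_def by (rule bdd_belowI[of _ 0]) auto
  have Aupos: "\<And>a. a \<in> Au \<Longrightarrow> a > 0" by (auto simp: Au_def)
  have lu0: "Inf Au \<ge> 0" using \<alpha>0 Aupos by (intro cInf_greatest) (auto intro: less_imp_le)
  have bnd: "Inf Auv \<le> ?C * Inf Au * \<beta>" if \<beta>: "\<beta> > 0" "Iv \<le> \<beta> ^ N" for \<beta>
  proof -
    have "Inf Auv / (?C * \<beta>) \<le> a" if a: "a \<in> Au" for a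
    proof -
      have "Inf Auv \<le> ?C * a * \<beta>" by (rule cInf_lower[OF est[OF a \<beta>] bddAuv])
      then show ?thesis using C1 \<beta> by (simp add: divide_le_eq mult_ac)
    qed
    then have "Inf Auv / (?C * \<beta>) \<le> Inf Au" using \<alpha>0 by (intro cInf_greatest) auto
    then show ?thesis using C1 \<beta> by (simp add: divide_le_eq mult_ac)
  qed
  have "Inf Auv \<le> ?C * Inf Au * lp_norm N v"
  proof (cases "Iv > 0")
    case True
    then have "lp_norm N v = \<beta>0" by (simp add: lp_norm_def Iv_def \<beta>0_def)
    then show ?thesis using bnd[OF \<beta>0] by simp
  next
    case False
    then have Iv00: "Iv = 0" using Iv0 by simp
    then have "lp_norm N v = 0" by (simp add: lp_norm_def Iv_def)
    moreover have "Inf Auv \<le> 0"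
    proof (rule ccontr)
      assume "\<not> Inf Auv \<le> 0"
      then have pos: "Inf Auv > 0" by simp
      define \<beta> where "\<beta> = Inf Auv / (2 * (?C * Inf Au + 1))"
      have D: "?C * Inf Au + 1 > 0" using C1 lu0 by (simp add: add_nonneg_pos)
      have bp: "\<beta> > 0" using pos D by (simp add: \<beta>_def)
      have "Inf Auv \<le> ?C * Inf Au * \<beta>" using bnd[of \<beta>] bp Iv00 by simp
      also have "\<dots> < Inf Auv"
      proof -
        have "?C * Inf Au * \<beta> = Inf Auv * ((?C * Inf Au) / (2 * (?C * Inf Au + 1)))"
          by (simp add: \<beta>_def)
        also have "(?C * Inf Au) / (2 * (?C * Inf Au + 1)) < 1"
          using D lu0 C1 by (simp add: divide_less_eq add_nonneg_pos)
        then have "Inf Auv * ((?C * Inf Au) / (2 * (?C * Inf Au + 1))) < Inf Auv * 1"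
          using pos by (intro mult_strict_left_mono) auto
        finally show ?thesis by simp
      qed
      finally show False by simp
    qed
    ultimately show ?thesis by simp
  qed
  then show ?thesis using memb luv lu by simp
qed

end

theorem proposition2p17:
  fixes \<Lambda> :: "real \<Rightarrow> real"
  assumes N2: "CARD('n::finite) \<ge> 2"
    and young: "young_function \<Lambda>"
    and diff: "\<forall>t>0. \<Lambda> differentiable (at t)"
    and s_lt: "s_index \<Lambda> < ereal (real CARD('n))"
  shows "\<exists>C>0. \<forall>(u :: real^'n \<Rightarrow> real) v.
           u \<in> orlicz_space (sobolev_conjugate \<Lambda> CARD('n)) \<longrightarrow>
           v \<in> lp_space CARD('n) \<longrightarrow>
           (\<lambda>x. u x * v x) \<in> orlicz_space \<Lambda> \<and>
           luxemburg_norm \<Lambda> (\<lambda>x. u x * v x)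
             \<le> C * luxemburg_norm (sobolev_conjugate \<Lambda> CARD('n)) u * lp_norm CARD('n) v"
proof -
  obtain s0 where s0: "s_index \<Lambda> < ereal s0" "ereal s0 < ereal (real CARD('n))"
    using ereal_dense2[OF s_lt] by blast
  have sb: "t * deriv \<Lambda> t / \<Lambda> t \<le> s0" if "t > 0" for t
  proof -
    have "ereal (t * deriv \<Lambda> t / \<Lambda> t) \<le> s_index \<Lambda>"
      unfolding s_index_def by (rule SUP_upper) (use that in simp)
    then have "ereal (t * deriv \<Lambda> t / \<Lambda> t) < ereal s0" using s0(1) by (rule le_less_trans)
    then show ?thesis by simp
  qed
  interpret Y: yset \<Lambda> "CARD('n)" s0
    by unfold_locales (use young diff N2 s0 sb in auto)
  have "1 + Y.K > 0" using Y.K_pos by simp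
  moreover have "\<forall>(u :: real^'n \<Rightarrow> real) v.
           u \<in> orlicz_space (sobolev_conjugate \<Lambda> CARD('n)) \<longrightarrow>
           v \<in> lp_space CARD('n) \<longrightarrow>
           (\<lambda>x. u x * v x) \<in> orlicz_space \<Lambda> \<and>
           luxemburg_norm \<Lambda> (\<lambda>x. u x * v x)
             \<le> (1 + Y.K) * luxemburg_norm (sobolev_conjugate \<Lambda> CARD('n)) u * lp_norm CARD('n) v"
    using Y.main by blast
  ultimately show ?thesis by blast
qed

end
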